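(* Let $m,b\ge1$, $V=(\mathbb{F}_2)^{mb}$, let $\mathbf M\in\mathrm{GL}(V)$ have order $t$, and define $\alpha:V\to(\mathbb{F}_2)^{2^m bt}$ by $\alpha(v)=(\varepsilon(v),\varepsilon(\mathbf Mv),\dots,\varepsilon(\mathbf M^{t-1}v))$. Then $2^m b-(b-1)\le\dim_{\mathbb{F}_2}\langle\alpha(V)\rangle\le(2^m b-(b-1))t$.
   Context: Identify $(\mathbb{F}_2)^m$ with $\mathbb{F}_{2^m}=\mathbb{F}_2[x]/(p)$ for a primitive polynomial $p$ of degree $m$, with primitive element $\gamma$ (a root of $p$). Let $e_1,\dots,e_{2^m}$ be the standard basis of $(\mathbb{F}_2)^{2^m}$ and define $\varepsilon':\mathbb{F}_{2^m}\to(\mathbb{F}_2)^{2^m}$ by $\varepsilon'(0)=e_1$, $\varepsilon'(\gamma^i)=e_{i+1}$ for $1\le i\le2^m-1$. Writing $v\in V$ as $(v_1,\dots,v_b)$ with $v_j\in(\mathbb{F}_2)^m$, set $\varepsilon(v)=(\varepsilon'(v_1),\dots,\varepsilon'(v_b))\in(\mathbb{F}_2)^{2^m b}$. $\langle S\rangle$ denotes the $\mathbb{F}_2$-linear span. *)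

theory Defs
  imports "HOL-Library.Z2" "HOL-Library.Function_Algebras" "HOL-Computational_Algebra.Computational_Algebra"
begin

(* F_2 is the type bit. Vectors of (F_2)^N are functions nat => bit vanishing
   at indices >= N (coordinates are 0-based). *)

definition Vsp :: "nat \<Rightarrow> (nat \<Rightarrow> bit) set" where
  "Vsp N = {v. \<forall>i\<ge>N. v i = 0}"

definition vscale :: "bit \<Rightarrow> (nat \<Rightarrow> bit) \<Rightarrow> (nat \<Rightarrow> bit)" where
  "vscale c v = (\<lambda>i. c * v i)"

definition vadd :: "(nat \<Rightarrow> bit) \<Rightarrow> (nat \<Rightarrow> bit) \<Rightarrow> (nat \<Rightarrow> bit)" where
  "vadd u w = (\<lambda>i. u i + w i)"

definition primitive_poly :: "nat \<Rightarrow> bit poly \<Rightarrow> bool" where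
  "primitive_poly m p \<longleftrightarrow> degree p = m \<and> irreducible p \<and>
     [:0, 1:] ^ (2^m - 1) mod p = 1 \<and>
     (\<forall>k. 0 < k \<and> k < 2^m - 1 \<longrightarrow> [:0, 1:] ^ k mod p \<noteq> 1)"

(* identification (F_2)^m = F_2[x]/(p): (v_0,...,v_{m-1}) |-> sum v_j x^j
   (residues mod p represented by polynomials of degree < m) *)
definition field_of_vec :: "nat \<Rightarrow> (nat \<Rightarrow> bit) \<Rightarrow> bit poly" where
  "field_of_vec m v = (\<Sum>j<m. monom (v j) j)"

(* epsilon' : F_{2^m} -> (F_2)^{2^m}; 0 |-> e_1 (index 0), gamma^i |-> e_{i+1} (index i),
   1 <= i <= 2^m - 1 *)
definition eps' :: "nat \<Rightarrow> bit poly \<Rightarrow> (nat \<Rightarrow> bit) \<Rightarrow> (nat \<Rightarrow> bit)" where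
  "eps' m p v = (\<lambda>k. if field_of_vec m v = 0 then of_bool (k = 0)
      else of_bool (1 \<le> k \<and> k \<le> 2^m - 1 \<and> [:0, 1:] ^ k mod p = field_of_vec m v))"

definition eps :: "nat \<Rightarrow> nat \<Rightarrow> bit poly \<Rightarrow> (nat \<Rightarrow> bit) \<Rightarrow> (nat \<Rightarrow> bit)" where
  "eps m b p v = (\<lambda>i. if i < 2^m * b
      then eps' m p (\<lambda>j. if j < m then v ((i div 2^m) * m + j) else 0) (i mod 2^m)
      else 0)"

definition alpha :: "nat \<Rightarrow> nat \<Rightarrow> bit poly \<Rightarrow> ((nat \<Rightarrow> bit) \<Rightarrow> (nat \<Rightarrow> bit)) \<Rightarrow> nat
    \<Rightarrow> (nat \<Rightarrow> bit) \<Rightarrow> (nat \<Rightarrow> bit)" where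
  "alpha m b p M t v = (\<lambda>i. if i < 2^m * b * t
      then eps m b p ((M ^^ (i div (2^m * b))) v) (i mod (2^m * b))
      else 0)"

end

theory Submission
  imports Defs
begin


lemma UNIV_bit: "(UNIV :: bit set) = {0, 1}"
  by (auto intro: bit.exhaust)

lemma card_UNIV_bit: "card (UNIV :: bit set) = 2"
  by (simp add: UNIV_bit)

lemma primD:
  assumes "primitive_poly m p"
  shows "degree p = m" "irreducible p" "[:0,1:]^(2^m-1) mod p = 1"
    "\<And>k. 0 < k \<Longrightarrow> k < 2^m - 1 \<Longrightarrow> [:0,1:]^k mod p \<noteq> 1"
  using assms unfolding primitive_poly_def by blast+

lemma one_mod_p:
  assumes "primitive_poly m p"
  shows "1 mod p = (1 :: bit poly)"
proof -
  have e1: "[:0,1:]^(2^m-1) mod p = (1::bit poly)" using primD(3)[OF assms(1)] .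
  have "1 mod p = ([:0,1:]^(2^m-1) mod p) mod p" by (simp only: e1)
  also have "\<dots> = [:0,1:]^(2^m-1) mod p" by simp
  finally show ?thesis using e1 by simp
qed

lemma prim_not_dvd:
  assumes "primitive_poly m p" "m \<ge> 1"
  shows "\<not> p dvd [:0,1:]^k"
proof
  assume d: "p dvd [:0,1:]^k"
  define n where "n = 2^m - (1::nat)"
  define x where "x = ([:0,1:] :: bit poly)"
  have e1: "x^n mod p = 1" using primD(3)[OF assms(1)] unfolding n_def x_def .
  have one: "1 mod p = (1 :: bit poly)" using one_mod_p[OF assms(1)] .
  have "(2::nat)^1 \<le> 2^m" by (rule power_increasing) (use assms(2) in auto)
  hence n1: "1 \<le> n" unfolding n_def by simp
  have "x^(n*k) mod p = ((x^n mod p)^k) mod p" by (simp add: power_mult power_mod)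
  also have "\<dots> = 1" using e1 one by simp
  finally have A: "x^(n*k) mod p = 1" .
  have "n*k = k + (n*k - k)" using n1 by (simp add: mult_le_mono)
  hence "x^(n*k) = x^k * x^(n*k-k)" by (metis power_add)
  hence "x^(n*k) mod p = ((x^k mod p) * x^(n*k-k)) mod p" by (simp add: mod_mult_left_eq)
  also have "x^k mod p = 0" using d unfolding x_def by (rule dvd_imp_mod_0)
  finally have "x^(n*k) mod p = 0" by simp
  with A show False by simp
qed

lemma prim_inj:
  assumes "primitive_poly m p" "m \<ge> 1"
  shows "inj_on (\<lambda>k. [:0,1:]^k mod p) {1..2^m-1}"
proof (rule inj_onI, rule ccontr)
  fix k k' assume k: "k \<in> {1..2^m-1}" "k' \<in> {1..2^m-1}" and e: "[:0,1:]^k mod p = [:0,1:]^k' mod p"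
    and ne: "k \<noteq> k'"
  define n where "n = 2^m - (1::nat)"
  define x where "x = ([:0,1:] :: bit poly)"
  have e1: "x^n mod p = 1" using primD(3)[OF assms(1)] unfolding n_def x_def .
  have ord: "\<And>d. 0 < d \<Longrightarrow> d < n \<Longrightarrow> x^d mod p \<noteq> 1"
    using primD(4)[OF assms(1)] unfolding n_def x_def by blast
  have gen: "False" if "1 \<le> a" "a < a'" "a' \<le> n" "x^a mod p = x^a' mod p" for a a'
  proof -
    define d where "d = a' - a"
    have "(x^a * x^(n-a)) mod p = (x^a' * x^(n-a)) mod p"
      by (metis that(4) mod_mult_left_eq)
    moreover have "x^a * x^(n-a) = x^n" using that by (simp flip: power_add)
    moreover have "a' + (n - a) = n + d" using that d_def by simp
    hence "x^a' * x^(n-a) = x^n * x^d" by (simp only: power_add[symmetric])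
    ultimately have "x^n mod p = (x^n * x^d) mod p" by simp
    also have "\<dots> = ((x^n mod p) * x^d) mod p" by (simp add: mod_mult_left_eq)
    finally have "x^d mod p = 1" using e1 by simp
    moreover have "0 < d" "d < n" using that d_def by auto
    ultimately show False using ord by blast
  qed
  show False
  proof (cases "k < k'")
    case True thus ?thesis using gen[of k k'] k e ne unfolding n_def x_def by auto
  next
    case False thus ?thesis using gen[of k' k] k e ne unfolding n_def x_def by auto
  qed
qed

definition Sset :: "nat \<Rightarrow> bit poly set" where
  "Sset m = field_of_vec m ` (PiE {..<m} (\<lambda>_. UNIV))"

lemma field_of_vec_restrict: "field_of_vec m w = field_of_vec m (restrict w {..<m})"
  unfolding field_of_vec_def by (rule sum.cong) auto

lemma in_Sset: "field_of_vec m w \<in> Sset m"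
  unfolding Sset_def by (subst field_of_vec_restrict) auto

lemma deg_in_Sset:
  assumes "degree q < m" shows "q \<in> Sset m"
proof -
  have "m \<ge> 1" using assms by simp
  have "q = (\<Sum>i\<le>m-1. monom (coeff q i) i)"
    using assms by (subst poly_as_sum_of_monoms') auto
  also have "{..m-1} = {..<m}" using \<open>m \<ge> 1\<close> by auto
  finally have "q = field_of_vec m (coeff q)" unfolding field_of_vec_def by simp
  thus ?thesis using in_Sset by metis
qed

lemma card_Sset: "finite (Sset m) \<and> card (Sset m) \<le> 2^m"
proof -
  have f: "finite (PiE {..<m} (\<lambda>_. UNIV :: bit set))"
    by (rule finite_PiE) (auto simp: UNIV_bit)
  have "card (PiE {..<m} (\<lambda>_. UNIV :: bit set)) = 2^m"
    by (simp add: card_PiE card_UNIV_bit)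
  thus ?thesis using f unfolding Sset_def by (metis card_image_le finite_imageI)
qed

lemma prim_surj:
  assumes "primitive_poly m p" "m \<ge> 1" "field_of_vec m w \<noteq> 0"
  shows "\<exists>k\<in>{1..2^m-1}. [:0,1:]^k mod p = field_of_vec m w"
proof -
  let ?f = "\<lambda>k. [:0,1:]^k mod p"
  have dp: "degree p = m" "p \<noteq> 0" using primD(1,2)[OF assms(1)] by auto
  have sub: "?f ` {1..2^m-1} \<subseteq> Sset m - {0}"
  proof
    fix y assume "y \<in> ?f ` {1..2^m-1}"
    then obtain k where y: "y = ?f k" by auto
    have "y \<noteq> 0" using prim_not_dvd[OF assms(1,2), of k] y by auto
    hence "degree y < m" using degree_mod_less[OF dp(2), of "[:0,1:]^k"] y dp by auto
    thus "y \<in> Sset m - {0}" using deg_in_Sset \<open>y \<noteq> 0\<close> by auto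
  qed
  have c1: "card (?f ` {1..2^m-1}) = 2^m - 1"
    using prim_inj[OF assms(1,2)] by (simp add: card_image)
  have "0 \<in> Sset m" using deg_in_Sset[of 0 m] assms(2) by simp
  hence c2: "card (Sset m - {0}) \<le> 2^m - 1" using card_Sset[of m] by (simp add: diff_le_mono)
  have fin: "finite (Sset m - {0})" using card_Sset by auto
  have "card (?f ` {1..2^m-1}) = card (Sset m - {0})"
    using c1 c2 card_mono[OF fin sub] by linarith
  hence "?f ` {1..2^m-1} = Sset m - {0}" by (rule card_subset_eq[OF fin sub])
  moreover have "field_of_vec m w \<in> Sset m - {0}" using in_Sset assms(3) by auto
  ultimately have "field_of_vec m w \<in> ?f ` {1..2^m-1}" by simp
  then obtain k where "k \<in> {1..2^m-1}" and "field_of_vec m w = ?f k" by (rule imageE)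
  thus ?thesis by (intro bexI[of _ k]) simp_all
qed

lemma eps'_unit:
  assumes "primitive_poly m p" "m \<ge> 1"
  shows "\<exists>k<2^m. \<forall>r. eps' m p w r = of_bool (r = k)"
proof (cases "field_of_vec m w = 0")
  case True thus ?thesis by (intro exI[of _ 0]) (auto simp: eps'_def)
next
  case False
  then obtain k where k: "k \<in> {1..2^m-1}" "[:0,1:]^k mod p = field_of_vec m w"
    using prim_surj assms by blast
  have "\<forall>r. eps' m p w r = of_bool (r = k)"
  proof
    fix r
    have "(1 \<le> r \<and> r \<le> 2^m-1 \<and> [:0,1:]^r mod p = field_of_vec m w) \<longleftrightarrow> r = k"
      using k inj_onD[OF prim_inj[OF assms]] by auto
    thus "eps' m p w r = of_bool (r = k)" using False by (simp add: eps'_def)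
  qed
  moreover have "k < 2^m"
  proof -
    have "(0::nat) < 2^m" by simp
    thus ?thesis using k by auto
  qed
  ultimately show ?thesis by blast
qed



lemma VS_ok: "vector_space vscale"
  by unfold_locales (auto simp: vscale_def fun_eq_iff algebra_simps)

interpretation VS: vector_space vscale by (rule VS_ok)

definition ee :: "nat \<Rightarrow> nat \<Rightarrow> bit" where "ee j = (\<lambda>i. of_bool (i = j))"

lemma sum_fun_app: "(\<Sum>x\<in>A. f x) i = (\<Sum>x\<in>A. (f x) i)" for f :: "'a \<Rightarrow> nat \<Rightarrow> bit"
  by (induction A rule: infinite_finite_induct) auto

lemma sum_ee:
  assumes "finite A" "inj_on g A"
  shows "(\<Sum>x\<in>A. ee (g x)) = (\<lambda>i. of_bool (i \<in> g ` A))"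
  using assms
proof (induction A rule: finite_induct)
  case empty thus ?case by (auto simp: fun_eq_iff)
next
  case (insert x F)
  have ni: "g x \<notin> g ` F" using insert by auto
  have "(\<Sum>y\<in>insert x F. ee (g y)) = ee (g x) + (\<Sum>y\<in>F. ee (g y))"
    using insert by simp
  also have "\<dots> = (\<lambda>i. of_bool (i \<in> g ` insert x F))"
  proof
    fix i
    show "(ee (g x) + (\<Sum>y\<in>F. ee (g y))) i = of_bool (i \<in> g ` insert x F)"
    proof -
      have IH: "(\<Sum>y\<in>F. ee (g y)) i = of_bool (i \<in> g ` F)"
        using insert.IH[OF inj_on_subset[OF insert.prems subset_insertI]] by simp
      show ?thesis using ni IH by (cases "i = g x") (simp_all add: ee_def[of "g x"])
    qed
  qed
  finally show ?case .
qed

lemma bit_add_self: "(a::bit) + a = 0"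
  by (cases a) auto

lemma fun_add_self: "(f :: nat \<Rightarrow> bit) + f = 0"
  by (simp add: fun_eq_iff bit_add_self)

lemma dm:
  assumes "r < (N::nat)" shows "(s*N + r) div N = s" "(s*N + r) mod N = r"
  using assms by auto

definition wblk :: "nat \<Rightarrow> (nat \<Rightarrow> bit) \<Rightarrow> nat \<Rightarrow> nat \<Rightarrow> bit" where
  "wblk m u c = (\<lambda>j. if j < m then u (c * m + j) else 0)"

definition Kf :: "nat \<Rightarrow> bit poly \<Rightarrow> (nat \<Rightarrow> bit) \<Rightarrow> nat \<Rightarrow> nat" where
  "Kf m p u c = (SOME k. k < 2^m \<and> (\<forall>r. eps' m p (wblk m u c) r = of_bool (r = k)))"

lemma Kf:
  assumes "primitive_poly m p" "m \<ge> 1"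
  shows "Kf m p u c < 2^m" "eps' m p (wblk m u c) r = of_bool (r = Kf m p u c)"
proof -
  have "\<exists>k. k < 2^m \<and> (\<forall>r. eps' m p (wblk m u c) r = of_bool (r = k))"
    using eps'_unit[OF assms] by blast
  hence H: "Kf m p u c < 2^m \<and> (\<forall>r. eps' m p (wblk m u c) r = of_bool (r = Kf m p u c))"
    unfolding Kf_def by (rule someI_ex)
  thus "Kf m p u c < 2^m" by (rule conjunct1)
  from H show "eps' m p (wblk m u c) r = of_bool (r = Kf m p u c)" by blast
qed

lemma Kf_unique:
  assumes "primitive_poly m p" "m \<ge> 1" "\<forall>r. eps' m p (wblk m u c) r = of_bool (r = k0)"
  shows "Kf m p u c = k0"
proof -
  have "eps' m p (wblk m u c) k0 = 1" using assms(3) by simp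
  thus ?thesis using Kf(2)[OF assms(1,2), of u c k0] by simp
qed

lemma eps_eq:
  assumes "primitive_poly m p" "m \<ge> 1"
  shows "eps m b p u = (\<lambda>i. of_bool (i < 2^m*b \<and> i mod 2^m = Kf m p u (i div 2^m)))"
proof
  fix i
  have "(\<lambda>j. if j < m then u ((i div 2^m) * m + j) else 0) = wblk m u (i div 2^m)"
    by (simp add: wblk_def)
  thus "eps m b p u i = of_bool (i < 2^m*b \<and> i mod 2^m = Kf m p u (i div 2^m))"
    unfolding eps_def using Kf(2)[OF assms] by auto
qed

lemma alpha_eq:
  assumes "primitive_poly m p" "m \<ge> 1"
  shows "alpha m b p M t v = (\<lambda>i. of_bool (i < 2^m*b*t \<and>
     i mod (2^m*b) mod 2^m = Kf m p ((M ^^ (i div (2^m*b))) v) (i mod (2^m*b) div 2^m)))"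
proof
  fix i
  show "alpha m b p M t v i = of_bool (i < 2^m*b*t \<and>
     i mod (2^m*b) mod 2^m = Kf m p ((M ^^ (i div (2^m*b))) v) (i mod (2^m*b) div 2^m))"
  proof (cases "i < 2^m*b*t")
    case True
    hence "0 < 2^m*b" by (metis mult_0 not_less0 gr0I)
    hence "i mod (2^m*b) < 2^m*b" by simp
    thus ?thesis using True unfolding alpha_def eps_eq[OF assms] by simp
  qed (simp add: alpha_def)
qed



lemma dec:
  fixes P b c k s :: nat
  assumes "k < P" "c < b"
  shows "c*P + k < P*b" "(s*(P*b) + (c*P + k)) div (P*b) = s" "(s*(P*b) + (c*P + k)) mod (P*b) = c*P+k"
    "(c*P+k) div P = c" "(c*P+k) mod P = k"
proof -
  have "c*P + k < c*P + P" using assms by simp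
  also have "\<dots> = (c+1)*P" by simp
  also have "\<dots> \<le> b*P" using assms(2) by (intro mult_le_mono1) simp
  finally show 1: "c*P + k < P*b" by (simp add: mult.commute)
  show "(s*(P*b) + (c*P + k)) div (P*b) = s" "(s*(P*b) + (c*P + k)) mod (P*b) = c*P+k"
    using dm[OF 1] by auto
  show "(c*P+k) div P = c" "(c*P+k) mod P = k" using dm[OF assms(1)] by auto
qed

lemma alpha_sum:
  fixes b t :: nat and M :: "(nat \<Rightarrow> bit) \<Rightarrow> (nat \<Rightarrow> bit)" and v :: "nat \<Rightarrow> bit"
  assumes "primitive_poly m p" "m \<ge> 1"
  defines "G \<equiv> (\<lambda>x. fst x * (2^m*b) + (snd x * 2^m + Kf m p ((M^^fst x) v) (snd x)))"
  shows "alpha m b p M t v = (\<Sum>x\<in>{..<t}\<times>{..<b}. ee (G x))"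
proof -
  let ?P = "2^m :: nat" let ?N = "2^m*b :: nat"
  let ?A = "{..<t}\<times>{..<b}"
  have Klt: "\<And>u c. Kf m p u c < ?P" using Kf(1)[OF assms(1,2)] by blast
  have inj: "inj_on G ?A"
  proof (rule inj_onI)
    fix x y assume x: "x \<in> ?A" and y: "y \<in> ?A" and e: "G x = G y"
    have "G x div ?N = fst x" "G x mod ?N div ?P = snd x" using x dec[OF Klt] unfolding G_def by auto
    moreover have "G y div ?N = fst y" "G y mod ?N div ?P = snd y" using y dec[OF Klt] unfolding G_def by auto
    ultimately show "x = y" using e by (simp add: prod_eq_iff)
  qed
  have mem: "i \<in> G ` ?A \<longleftrightarrow> (i < ?N*t \<and>
     i mod ?N mod ?P = Kf m p ((M ^^ (i div ?N)) v) (i mod ?N div ?P))" for i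
  proof
    assume "i \<in> G ` ?A"
    then obtain s c where sc: "s < t" "c < b" "i = G (s,c)" by auto
    let ?k = "Kf m p ((M^^s) v) c"
    have d: "i div ?N = s" "i mod ?N = c*?P + ?k" "(c*?P + ?k) div ?P = c" "(c*?P + ?k) mod ?P = ?k"
      "c*?P + ?k < ?N"
      using dec[OF Klt sc(2)] sc unfolding G_def by auto
    have "i < s*?N + ?N" using d(5) sc(3) unfolding G_def by simp
    also have "\<dots> = (s+1)*?N" by simp
    also have "\<dots> \<le> t*?N" using sc(1) by (intro mult_le_mono1) simp
    finally show "i < ?N*t \<and> i mod ?N mod ?P = Kf m p ((M ^^ (i div ?N)) v) (i mod ?N div ?P)"
      using d by (simp add: mult.commute)
  next
    assume a: "i < ?N*t \<and> i mod ?N mod ?P = Kf m p ((M ^^ (i div ?N)) v) (i mod ?N div ?P)"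
    define s where "s = i div ?N"
    define c where "c = i mod ?N div ?P"
    have Npos: "0 < ?N" using a by (metis mult_0 not_less0 gr0I)
    have "s < t" unfolding s_def using a less_mult_imp_div_less[of i t ?N] by (simp add: mult.commute)
    moreover have "c < b" unfolding c_def
      using less_mult_imp_div_less[of "i mod ?N" b ?P] Npos by (simp add: mult.commute)
    moreover have "i = G (s,c)"
    proof -
      have "i = s * ?N + i mod ?N" unfolding s_def by (rule div_mult_mod_eq[symmetric])
      also have "i mod ?N = c * ?P + i mod ?N mod ?P" unfolding c_def by (rule div_mult_mod_eq[symmetric])
      finally show ?thesis using a unfolding G_def s_def c_def by simp
    qed
    ultimately show "i \<in> G ` ?A" by auto
  qed
  have S: "(\<Sum>x\<in>?A. ee (G x)) = (\<lambda>i. of_bool (i \<in> G ` ?A))" by (rule sum_ee[OF _ inj]) simp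
  show ?thesis
    unfolding S alpha_eq[OF assms(1,2)] by (simp only: fun_eq_iff mem) (rule allI, rule refl)
qed

lemma card_eq_aux:
  fixes P b t :: nat assumes "P \<ge> 1" "b \<ge> 1"
  shows "t + t*(b*(P-1)) = (P*b - (b-1))*t"
proof -
  have "b*(P-1) = P*b - b" by (simp add: diff_mult_distrib2 mult.commute)
  moreover have "P*b \<ge> b" using assms by simp
  ultimately have "1 + b*(P-1) = P*b - (b-1)" using assms by (simp add: Suc_diff_le)
  thus ?thesis by (metis mult.commute mult_Suc_right plus_1_eq_Suc)
qed

lemma upper_W:
  assumes "primitive_poly m p" "m \<ge> 1" "b \<ge> 1"
  shows "\<exists>W. finite W \<and> card W \<le> (2^m*b - (b-1))*t \<and> (\<forall>v. alpha m b p M t v \<in> VS.span W)"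
proof -
  define P where "P = (2::nat)^m"
  define N where "N = P*b"
  define f0 where "f0 s = (\<Sum>c<b. ee (s*N + c*P))" for s
  define W where "W = f0 ` {..<t} \<union> (\<lambda>(s,c,k). ee (s*N + (c*P + k)) + ee (s*N + c*P)) ` ({..<t}\<times>{..<b}\<times>{1..<P})"
  have finW: "finite W" unfolding W_def by simp
  have "card W \<le> card (f0 ` {..<t}) + card ((\<lambda>(s,c,k). ee (s*N + (c*P + k)) + ee (s*N + c*P)) ` ({..<t}\<times>{..<b}\<times>{1..<P}))"
    unfolding W_def by (rule card_Un_le)
  also have "\<dots> \<le> card {..<t} + card ({..<t}\<times>{..<b}\<times>{1..<P})"
    by (intro add_mono card_image_le) auto
  also have "\<dots> = t + t*(b*(P-1))" by (simp add: card_cartesian_product)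
  also have "\<dots> = (P*b - (b-1))*t" by (rule card_eq_aux) (use assms in \<open>auto simp: P_def\<close>)
  finally have cW: "card W \<le> (2^m*b - (b-1))*t" unfolding P_def .
  have sp: "alpha m b p M t v \<in> VS.span W" for v
  proof -
    let ?A = "{..<t}\<times>{..<b}"
    define G where "G x = fst x * (2^m*b) + (snd x * 2^m + Kf m p ((M^^fst x) v) (snd x))" for x
    define h where "h x = fst x * N + snd x * P" for x
    have al: "alpha m b p M t v = (\<Sum>x\<in>?A. ee (G x))"
      unfolding G_def by (rule alpha_sum[OF assms(1,2)])
    have "(\<Sum>x\<in>?A. ee (G x)) = (\<Sum>x\<in>?A. (ee (G x) + ee (h x)) + ee (h x))"
      by (rule sum.cong) (auto simp: add.assoc fun_add_self)
    also have "\<dots> = (\<Sum>x\<in>?A. ee (G x) + ee (h x)) + (\<Sum>x\<in>?A. ee (h x))"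
      by (rule sum.distrib)
    also have "(\<Sum>x\<in>?A. ee (h x)) = (\<Sum>s<t. f0 s)"
      unfolding f0_def sum.cartesian_product by (rule sum.cong) (auto simp: h_def)
    finally have eq0: "(\<Sum>x\<in>?A. ee (G x)) = (\<Sum>x\<in>?A. ee (G x) + ee (h x)) + (\<Sum>s<t. f0 s)" .
    have eq: "alpha m b p M t v = (\<Sum>x\<in>?A. ee (G x) + ee (h x)) + (\<Sum>s<t. f0 s)"
      by (rule trans[OF al eq0])
    have t1: "ee (G x) + ee (h x) \<in> VS.span W" if x: "x \<in> ?A" for x
    proof (cases "Kf m p ((M^^fst x) v) (snd x) = 0")
      case True
      hence "G x = h x" unfolding G_def h_def N_def P_def by simp
      thus ?thesis by (simp add: fun_add_self VS.span_zero)
    next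
      case False
      have "Kf m p ((M^^fst x) v) (snd x) < P" using Kf(1)[OF assms(1,2)] P_def by simp
      with False x have m3: "(fst x, snd x, Kf m p ((M^^fst x) v) (snd x)) \<in> {..<t}\<times>{..<b}\<times>{1..<P}"
        by auto
      have "ee (G x) + ee (h x) = (\<lambda>(s,c,k). ee (s*N + (c*P + k)) + ee (s*N + c*P)) (fst x, snd x, Kf m p ((M^^fst x) v) (snd x))"
        by (simp add: G_def h_def N_def P_def)
      hence "ee (G x) + ee (h x) \<in> W" using m3 unfolding W_def by blast
      thus ?thesis by (rule VS.span_base)
    qed
    have t2: "(\<Sum>s<t. f0 s) \<in> VS.span W"
      by (rule VS.span_sum) (auto simp: W_def intro!: VS.span_base)
    show ?thesis unfolding eq
      by (intro VS.span_add t2 VS.span_sum t1)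
  qed
  show ?thesis using finW cW sp by blast
qed

lemma upper:
  assumes "primitive_poly m p" "m \<ge> 1" "b \<ge> 1"
  shows "VS.dim (alpha m b p M t ` X) \<le> (2^m*b - (b-1))*t"
proof -
  obtain W where W: "finite W" "card W \<le> (2^m*b - (b-1))*t" "\<forall>v. alpha m b p M t v \<in> VS.span W"
    using upper_W[OF assms] by blast
  have "VS.dim (alpha m b p M t ` X) \<le> card W"
    by (rule VS.dim_le_card[OF _ W(1)]) (auto intro: W(3)[rule_format])
  with W(2) show ?thesis by simp
qed



definition mask :: "nat set \<Rightarrow> (nat \<Rightarrow> bit) \<Rightarrow> nat \<Rightarrow> bit" where
  "mask J w = (\<lambda>i. if i \<in> J then w i else 0)"

lemma mask_span: "mask J ` VS.span S \<subseteq> VS.span (mask J ` S)"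
proof -
  have "VS.span S \<subseteq> {x. mask J x \<in> VS.span (mask J ` S)}"
  proof (rule VS.span_minimal)
    show "S \<subseteq> {x. mask J x \<in> VS.span (mask J ` S)}" by (auto intro: VS.span_base)
    show "VS.subspace {x. mask J x \<in> VS.span (mask J ` S)}"
    proof (rule VS.subspaceI)
      have "mask J 0 = 0" by (simp add: mask_def fun_eq_iff)
      thus "0 \<in> {x. mask J x \<in> VS.span (mask J ` S)}" by (simp add: VS.span_zero)
    next
      fix x y assume "x \<in> {x. mask J x \<in> VS.span (mask J ` S)}" "y \<in> {x. mask J x \<in> VS.span (mask J ` S)}"
      moreover have "mask J (x + y) = mask J x + mask J y" by (simp add: mask_def fun_eq_iff)
      ultimately show "x + y \<in> {x. mask J x \<in> VS.span (mask J ` S)}" by (simp add: VS.span_add)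
    next
      fix c x assume "x \<in> {x. mask J x \<in> VS.span (mask J ` S)}"
      moreover have "mask J (vscale c x) = vscale c (mask J x)" by (simp add: mask_def vscale_def fun_eq_iff)
      ultimately show "vscale c x \<in> {x. mask J x \<in> VS.span (mask J ` S)}" by (simp add: VS.span_scale)
    qed
  qed
  thus ?thesis by auto
qed

lemma indep_ee: "VS.independent (ee ` Y)"
proof
  assume "VS.dependent (ee ` Y)"
  then obtain j where j: "j \<in> Y" "ee j \<in> VS.span (ee ` Y - {ee j})"
    unfolding VS.dependent_def by auto
  have "VS.span (ee ` Y - {ee j}) \<subseteq> {w. w j = 0}"
  proof (rule VS.span_minimal)
    show "ee ` Y - {ee j} \<subseteq> {w. w j = 0}" by (auto simp: ee_def)
    show "VS.subspace {w. w j = 0}" by (rule VS.subspaceI) (auto simp: vscale_def)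
  qed
  with j have "ee j j = 0" by auto
  thus False by (simp add: ee_def)
qed

lemma inj_ee: "inj ee"
proof (rule injI)
  fix x y assume "ee x = ee y"
  hence "ee x x = ee y x" by simp
  thus "x = y" by (simp add: ee_def)
qed

lemma Kf_zero:
  assumes "primitive_poly m p" "m \<ge> 1" "field_of_vec m (wblk m u c) = 0"
  shows "Kf m p u c = 0"
  by (rule Kf_unique[OF assms(1,2)]) (simp add: eps'_def assms(3))

lemma Kf_pow:
  assumes "primitive_poly m p" "m \<ge> 1" "1 \<le> k" "k \<le> 2^m - 1"
    "field_of_vec m (wblk m u c) = [:0,1:]^k mod p"
  shows "Kf m p u c = k"
proof (rule Kf_unique[OF assms(1,2)], rule allI)
  fix r
  have ne: "[:0,1:]^k mod p \<noteq> 0" using prim_not_dvd[OF assms(1,2), of k] by auto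
  have "(1 \<le> r \<and> r \<le> 2^m - 1 \<and> [:0,1:]^r mod p = [:0,1:]^k mod p) \<longleftrightarrow> r = k"
    using assms(3,4) inj_onD[OF prim_inj[OF assms(1,2)], of r k] by auto
  thus "eps' m p (wblk m u c) r = of_bool (r = k)"
    unfolding eps'_def assms(5) using ne by simp
qed

lemma alpha_first:
  assumes "primitive_poly m p" "m \<ge> 1" "t > 0" "i < 2^m*b"
  shows "alpha m b p M t v i = of_bool (i mod 2^m = Kf m p v (i div 2^m))"
proof -
  have "2^m*b*1 \<le> 2^m*b*t" using assms(3) by (intro mult_le_mono2) simp
  hence "i < 2^m*b*t" using assms(4) by (simp only: mult_1_right)
  thus ?thesis using assms(4) by (simp add: alpha_eq[OF assms(1,2)])
qed

lemma field_zero: "field_of_vec m (\<lambda>j. 0) = 0"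
  by (simp add: field_of_vec_def)

lemma blk_disj:
  fixes c c' j m :: nat
  assumes "j < m" "c' \<noteq> c"
  shows "\<not> (c*m \<le> c'*m + j \<and> c'*m + j < c*m + m)"
proof (cases "c' < c")
  case True
  have "c'*m + j < (c'+1)*m" using assms(1) by simp
  also have "\<dots> \<le> c*m" using True by (intro mult_le_mono1) simp
  finally show ?thesis by simp
next
  case False
  hence "c + 1 \<le> c'" using assms(2) by simp
  hence "(c+1)*m \<le> c'*m" by (intro mult_le_mono1)
  thus ?thesis by simp
qed

lemma field_coeff:
  assumes "degree q < m"
  shows "field_of_vec m (\<lambda>j. if j < m then coeff q j else 0) = q"
proof -
  have "m \<ge> 1" using assms by simp
  have "field_of_vec m (\<lambda>j. if j < m then coeff q j else 0) = (\<Sum>j<m. monom (coeff q j) j)"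
    unfolding field_of_vec_def by (rule sum.cong) auto
  also have "{..<m} = {..m-1}" using \<open>m \<ge> 1\<close> by auto
  also have "(\<Sum>j\<le>m-1. monom (coeff q j) j) = q"
    using assms by (intro poly_as_sum_of_monoms') simp
  finally show ?thesis .
qed

lemma vck_facts:
  assumes "primitive_poly m p" "m \<ge> 1" "c < b" "1 \<le> k" "k < 2^m"
  defines "q \<equiv> [:0,1:]^k mod p"
  defines "vv \<equiv> (\<lambda>i. if c*m \<le> i \<and> i < c*m + m then coeff q (i - c*m) else 0)"
  shows "vv \<in> Vsp (m*b)" "\<And>c'. Kf m p vv c' = (if c' = c then k else 0)"
proof -
  have qne: "q \<noteq> 0" unfolding q_def using prim_not_dvd[OF assms(1,2), of k] by auto
  have dp: "degree p = m" "p \<noteq> 0" using primD(1,2)[OF assms(1)] assms(2) by auto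
  have degq: "degree q < m" using degree_mod_less[OF dp(2), of "[:0,1:]^k"] qne dp unfolding q_def by auto
  have "(c+1)*m \<le> b*m" using assms(3) by (intro mult_le_mono1) simp
  hence cm: "c*m + m \<le> m*b" by (simp add: mult.commute)
  show "vv \<in> Vsp (m*b)" unfolding Vsp_def vv_def using cm by auto
  fix c'
  show "Kf m p vv c' = (if c' = c then k else 0)"
  proof (cases "c' = c")
    case True
    have "wblk m vv c = (\<lambda>j. if j < m then coeff q j else 0)"
      by (simp add: wblk_def vv_def fun_eq_iff)
    hence "field_of_vec m (wblk m vv c) = [:0,1:]^k mod p"
      using field_coeff[OF degq] unfolding q_def by simp
    thus ?thesis using Kf_pow[OF assms(1,2,4)] assms(5) True by simp
  next
    case False
    have "wblk m vv c' = (\<lambda>j. 0)"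
      using blk_disj[OF _ False] by (auto simp: wblk_def vv_def fun_eq_iff)
    hence "Kf m p vv c' = 0" using Kf_zero[OF assms(1,2)] field_zero by metis
    thus ?thesis using False by simp
  qed
qed

lemma lower:
  assumes "primitive_poly m p" "m \<ge> 1" "b \<ge> 1" "t > 0"
  shows "2^m*b - (b-1) \<le> VS.dim (alpha m b p M t ` Vsp (m*b))"
proof -
  define P where "P = (2::nat)^m"
  define X where "X = alpha m b p M t ` Vsp (m*b)"
  define J where "J = insert 0 ((\<lambda>(c,k). c*P + k) ` ({..<b}\<times>{1..<P}))"
  let ?al = "alpha m b p M t"
  have "(2::nat)^1 \<le> 2^m" by (rule power_increasing) (use assms(2) in auto)
  hence P2: "P \<ge> 2" unfolding P_def by simp
  have Jcases: "i = 0 \<or> (\<exists>c k. c < b \<and> 1 \<le> k \<and> k < P \<and> i = c*P + k)" if "i \<in> J" for i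
    using that unfolding J_def by auto
  have J_lt: "i < P*b" if "i \<in> J" for i
    using Jcases[OF that] dec(1)[of _ P _ b] P2 assms(3) by (auto simp: mult.commute)
  have alf: "?al v i = of_bool (i mod P = Kf m p v (i div P))" if "i \<in> J" for v i
    unfolding P_def using alpha_first[OF assms(1,2,4)] J_lt[OF that] unfolding P_def by blast
  have v0: "(\<lambda>_. 0) \<in> Vsp (m*b)" by (simp add: Vsp_def)
  have K0: "Kf m p (\<lambda>_. 0) c = 0" for c
  proof -
    have "wblk m (\<lambda>_. 0) c = (\<lambda>j. 0)" by (simp add: wblk_def)
    thus ?thesis using Kf_zero[OF assms(1,2)] field_zero by metis
  qed
  have e0: "mask J (?al (\<lambda>_. 0)) = ee 0"
  proof
    fix i
    show "mask J (?al (\<lambda>_. 0)) i = ee 0 i"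
    proof (cases "i \<in> J")
      case True
      note a = alf[OF True, of "\<lambda>_. 0", unfolded K0]
      from Jcases[OF True] show ?thesis
      proof
        assume "i = 0" thus ?thesis using a True by (simp add: mask_def ee_def)
      next
        assume "\<exists>c k. c < b \<and> 1 \<le> k \<and> k < P \<and> i = c*P + k"
        then obtain c k where ck: "c < b" "1 \<le> k" "k < P" "i = c*P + k" by blast
        have "i mod P = k" using ck dec(5)[of k P c b] by simp
        thus ?thesis using a True ck by (simp add: mask_def ee_def)
      qed
    qed (simp add: mask_def ee_def J_def)
  qed
  have ek: "ee j \<in> mask J ` VS.span X" if "j \<in> J" for j
  proof -
    from Jcases[OF that] show ?thesis
    proof
      assume "j = 0"
      moreover have "?al (\<lambda>_. 0) \<in> VS.span X" unfolding X_def using v0 by (auto intro: VS.span_base)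
      ultimately show ?thesis using e0 by (metis imageI)
    next
      assume "\<exists>c k. c < b \<and> 1 \<le> k \<and> k < P \<and> j = c*P + k"
      then obtain c k where ck: "c < b" "1 \<le> k" "k < P" "j = c*P + k" by blast
      define vv where "vv = (\<lambda>i. if c*m \<le> i \<and> i < c*m + m then coeff ([:0,1:]^k mod p) (i - c*m) else 0)"
      have vvV: "vv \<in> Vsp (m*b)" and Kv: "\<And>c'. Kf m p vv c' = (if c' = c then k else 0)"
        using vck_facts[OF assms(1,2) ck(1,2) ck(3)[unfolded P_def]] unfolding vv_def by blast+
      define y where "y = ?al vv + (if c = 0 then 0 else ?al (\<lambda>_. 0))"
      have s1: "?al vv \<in> VS.span X" using vvV unfolding X_def by (intro VS.span_base) simp
      have s0: "?al (\<lambda>_. 0) \<in> VS.span X" using v0 unfolding X_def by (intro VS.span_base) simp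
      have yX: "y \<in> VS.span X" unfolding y_def
        by (cases "c = 0") (simp add: s1, simp add: VS.span_add[OF s1 s0])
      have "mask J y = ee j"
      proof
        fix i
        show "mask J y i = ee j i"
        proof (cases "i \<in> J")
          case False
          have "j \<in> J" using ck unfolding J_def by auto
          thus ?thesis using False by (auto simp: mask_def ee_def)
        next
          case True
          have a1: "?al vv i = of_bool (i mod P = (if i div P = c then k else 0))"
            using alf[OF True, of vv] Kv by simp
          have a2: "?al (\<lambda>_. 0) i = of_bool (i mod P = 0)"
            using alf[OF True, of "\<lambda>_. 0"] K0 by simp
          have yi: "mask J y i = of_bool (i mod P = (if i div P = c then k else 0)) + (if c = 0 then 0 else of_bool (i mod P = 0))"
            using True a1 a2 by (simp add: mask_def y_def)
          from Jcases[OF True] show ?thesis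
          proof
            assume i0: "i = 0"
            have "j \<noteq> 0" using ck by simp
            thus ?thesis using yi i0 ck by (cases "c = 0") (auto simp: ee_def)
          next
            assume "\<exists>c k. c < b \<and> 1 \<le> k \<and> k < P \<and> i = c*P + k"
            then obtain c' k' where ck': "c' < b" "1 \<le> k'" "k' < P" "i = c'*P + k'" by blast
            have d': "i mod P = k'" "i div P = c'" using ck' dec(4,5)[of k' P c' b] by auto
            have eqv: "i = j \<longleftrightarrow> c' = c \<and> k' = k"
            proof
              assume "i = j"
              hence "i div P = c" "i mod P = k" using ck dec(4,5)[of k P c b] by auto
              thus "c' = c \<and> k' = k" using d' by simp
            qed (use ck ck' in simp)
            show ?thesis using yi d' eqv ck ck' by (auto simp: ee_def bit_add_self)
          qed
        qed
      qed
      thus ?thesis using yX by (metis imageI)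
    qed
  qed
  obtain W where W: "finite W" "card W \<le> (2^m*b - (b-1))*t" "\<forall>v. ?al v \<in> VS.span W"
    using upper_W[OF assms(1,2,3)] by blast
  obtain B where B: "B \<subseteq> X" "VS.independent B" "X \<subseteq> VS.span B" "card B = VS.dim X"
    using VS.basis_exists by blast
  have "B \<subseteq> VS.span W" using B(1) W(3) unfolding X_def by auto
  hence finB: "finite B" using VS.independent_span_bound[OF W(1) B(2)] by blast
  have "VS.span X \<subseteq> VS.span B" using VS.span_mono[OF B(3)] VS.span_span by blast
  hence "ee ` J \<subseteq> VS.span (mask J ` B)" using ek mask_span[of J B] by blast
  hence "card (ee ` J) \<le> card (mask J ` B)"
    using VS.independent_span_bound[OF _ indep_ee] finB by blast
  also have "\<dots> \<le> card B" using finB by (rule card_image_le)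
  finally have c1: "card (ee ` J) \<le> VS.dim X" using B(4) by simp
  have injJ: "inj_on (\<lambda>(c,k). c*P + k) ({..<b}\<times>{1..<P})"
  proof (rule inj_onI)
    fix x y assume x: "x \<in> {..<b}\<times>{1..<P}" and y: "y \<in> {..<b}\<times>{1..<P}"
      and e: "(\<lambda>(c,k). c*P + k) x = (\<lambda>(c,k). c*P + k) y"
    obtain c k where xe: "x = (c,k)" by (cases x)
    obtain c' k' where ye: "y = (c',k')" by (cases y)
    from x y e have h: "c < b" "1 \<le> k" "k < P" "c' < b" "1 \<le> k'" "k' < P" "c*P + k = c'*P + k'"
      unfolding xe ye by auto
    have "(c*P+k) div P = c" "(c*P+k) mod P = k" using dec(4,5)[of k P c b] h by auto
    moreover have "(c'*P+k') div P = c'" "(c'*P+k') mod P = k'" using dec(4,5)[of k' P c' b] h by auto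
    ultimately show "x = y" using h(7) unfolding xe ye by simp
  qed
  have "0 \<notin> (\<lambda>(c,k). c*P + k) ` ({..<b}\<times>{1..<P})" by auto
  hence "card J = 1 + b*(P-1)" unfolding J_def using card_image[OF injJ]
    by (simp add: card_cartesian_product)
  also have "\<dots> = P*b - (b-1)" using card_eq_aux[of P b 1] P2 assms(3) by simp
  finally have "card (ee ` J) = 2^m*b - (b-1)"
    using card_image[OF inj_on_subset[OF inj_ee subset_UNIV]] unfolding P_def by simp
  with c1 show ?thesis unfolding X_def by simp
qed


theorem mainTheorem8:
  fixes m b t :: nat and p :: "bit poly" and M :: "(nat \<Rightarrow> bit) \<Rightarrow> (nat \<Rightarrow> bit)"
  assumes "m \<ge> 1" and "b \<ge> 1"
    and "primitive_poly m p"
    and "bij_betw M (Vsp (m * b)) (Vsp (m * b))"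
    and "\<forall>u\<in>Vsp (m * b). \<forall>w\<in>Vsp (m * b). M (vadd u w) = vadd (M u) (M w)"
    and "\<forall>c. \<forall>u\<in>Vsp (m * b). M (vscale c u) = vscale c (M u)"
    and "t > 0" and "\<forall>v\<in>Vsp (m * b). (M ^^ t) v = v"
    and "\<forall>k. 0 < k \<and> k < t \<longrightarrow> (\<exists>v\<in>Vsp (m * b). (M ^^ k) v \<noteq> v)"
  shows "2^m * b - (b - 1) \<le> vector_space.dim vscale (alpha m b p M t ` Vsp (m * b))
    \<and> vector_space.dim vscale (alpha m b p M t ` Vsp (m * b)) \<le> (2^m * b - (b - 1)) * t"
  proof -
  have "vector_space.dim vscale (alpha m b p M t ` Vsp (m * b)) \<le> (2^m*b - (b-1))*t"
    using upper[OF assms(3,1,2)] by simp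
  moreover have "2^m*b - (b-1) \<le> vector_space.dim vscale (alpha m b p M t ` Vsp (m * b))"
    using lower[OF assms(3,1,2,7)] by simp
  ultimately show ?thesis by simp
qed

end
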